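(* Let $n \geq 1$, $N := 2^n$, and let $\ket{\psi} \in \mathbb{C}^N$ be any $n$-qubit (unit-norm) state. Then there exists a subset $S \subseteq [N]$ such that $|\langle S | \psi\rangle| \geq \dfrac{1}{8\sqrt{n+3}}$.
   Context: The computational basis of $n$ qubits is indexed by $[N] = \{1,\dots,N\}$, $N = 2^n$, written $\ket{1},\dots,\ket{N}$. For a nonempty subset $S \subseteq [N]$, the subset state is $\ket{S} := \frac{1}{\sqrt{|S|}} \sum_{i \in S} \ket{i}$. *)

theory Defs
  imports "HOL-Analysis.Analysis"
begin

text \<open>States of n qubits are functions from the basis index set {1..2^n} to complex
  amplitudes (values outside {1..2^n} are ignored).\<close>

definition subset_state :: "nat set \<Rightarrow> nat \<Rightarrow> complex" where
  "subset_state S i = (if i \<in> S then complex_of_real (1 / sqrt (real (card S))) else 0)"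

definition braket :: "nat \<Rightarrow> (nat \<Rightarrow> complex) \<Rightarrow> (nat \<Rightarrow> complex) \<Rightarrow> complex" where
  "braket N phi psi = (\<Sum>i\<in>{1..N}. cnj (phi i) * psi i)"

end

theory Submission
  imports Defs
begin

lemma ln_step:
  assumes "k \<ge> (2::nat)"
  shows "ln (real k) \<ge> ln (real (k - 1)) + 1 / real k"
proof -
  have k1: "real (k - 1) = real k - 1" using assms by simp
  have pos: "real k - 1 > 0" using assms by simp
  have "ln ((real k - 1) / real k) \<le> (real k - 1) / real k - 1"
    using pos by (intro ln_le_minus_one) simp
  moreover have "ln ((real k - 1) / real k) = ln (real k - 1) - ln (real k)"
    using pos by (simp add: ln_div)
  moreover have "(real k - 1) / real k - 1 = - 1 / real k" using pos by (simp add: field_simps)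
  ultimately show ?thesis using k1 by simp
qed

lemma key:
  fixes a :: "nat \<Rightarrow> real"
  shows "finite A \<Longrightarrow> card A = k \<Longrightarrow> k \<ge> 1 \<Longrightarrow> (\<forall>i\<in>A. a i \<ge> 0) \<Longrightarrow>
    \<exists>S. S \<subseteq> A \<and> S \<noteq> {} \<and> real (card S) * (\<Sum>i\<in>A. (a i)^2) \<le> (\<Sum>i\<in>S. a i)^2 * (1 + ln (real k))"
proof (induction k arbitrary: A rule: less_induct)
  case (less k A)
  define Q where "Q = (\<Sum>i\<in>A. (a i)^2)"
  define L' where "L' = 1 + ln (real k)"
  have Ane: "A \<noteq> {}" using less by auto
  show ?case
  proof (cases "real k * Q \<le> (\<Sum>i\<in>A. a i)^2 * L'")
    case True
    then show ?thesis using Ane less by (auto simp: Q_def L'_def)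
  next
    case False
    then have F: "(\<Sum>i\<in>A. a i)^2 * L' < real k * Q" by simp
    have L'pos: "L' \<ge> 1" unfolding L'_def using less by simp
    have k2: "k \<ge> 2"
    proof (rule ccontr)
      assume "\<not> k \<ge> 2"
      then have "k = 1" using less by simp
      then obtain x where A: "A = {x}" using less card_1_singletonE by blast
      then show False using F \<open>k = 1\<close> by (simp add: Q_def L'_def)
    qed
    obtain m where m: "m \<in> A" "\<forall>i\<in>A. a m \<le> a i"
      using less(2) Ane by (metis (no_types, lifting) arg_min_if_finite(1,2) le_less_linear)
    define A' where "A' = A - {m}"
    have cA': "card A' = k - 1" using less m by (simp add: A'_def)
    have fA': "finite A'" using less by (simp add: A'_def)
    obtain S where S: "S \<subseteq> A'" "S \<noteq> {}"
      "real (card S) * (\<Sum>i\<in>A'. (a i)^2) \<le> (\<Sum>i\<in>S. a i)^2 * (1 + ln (real (k - 1)))"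
    proof -
      have "k - 1 < k" "1 \<le> k - 1" "\<forall>i\<in>A'. a i \<ge> 0" using k2 less(5) by (auto simp: A'_def)
      from less.IH[OF this(1) fA' cA' this(2,3)] show ?thesis using that by blast
    qed
    define Q' where "Q' = (\<Sum>i\<in>A'. (a i)^2)"
    define L where "L = 1 + ln (real (k - 1))"
    have QQ: "Q = Q' + (a m)^2" unfolding Q_def Q'_def A'_def
      using less(2) m(1) by (simp add: sum.remove)
    have Lpos: "L \<ge> 1" unfolding L_def using k2 by simp
    have LL: "L' \<ge> L + 1 / real k" unfolding L_def L'_def using ln_step[OF k2] by simp
    have am0: "a m \<ge> 0" using m less(5) by auto
    have "real k * a m = (\<Sum>i\<in>A. a m)" using less by simp
    also have "\<dots> \<le> (\<Sum>i\<in>A. a i)" using m by (intro sum_mono) auto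
    finally have ka: "real k * a m \<le> (\<Sum>i\<in>A. a i)" .
    have "(real k * a m)^2 \<le> (\<Sum>i\<in>A. a i)^2"
      using ka am0 by (intro power_mono) auto
    then have "(real k * a m)^2 * L' \<le> (\<Sum>i\<in>A. a i)^2 * L'"
      using L'pos by (intro mult_right_mono) auto
    with F have "(real k * a m)^2 * L' < real k * Q" by linarith
    then have am: "real k * ((a m)^2 * L') < Q"
      using k2 by (simp add: power2_eq_square algebra_simps)
    have "real k * L' \<ge> real k * L + 1"
      using LL k2 mult_left_mono[OF LL, of "real k"] by (simp add: field_simps)
    then have "(a m)^2 * (real k * L') \<ge> (a m)^2 * (real k * L + 1)"
      by (intro mult_left_mono) auto
    with am QQ have Q'b: "Q' > real k * L * (a m)^2" by (simp add: algebra_simps)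
    have Q'pos: "Q' > 0"
    proof -
      have "real k * L * (a m)^2 \<ge> 0" using Lpos by simp
      then show ?thesis using Q'b by linarith
    qed
    have QL: "Q' * L' \<ge> Q * L"
    proof -
      have "Q' * L' \<ge> Q' * (L + 1 / real k)" using LL Q'pos by (intro mult_left_mono) auto
      then have "Q' * L' \<ge> Q' * L + Q' / real k" by (simp add: distrib_left)
      moreover have "Q' / real k \<ge> L * (a m)^2" using Q'b k2
        by (simp add: field_simps)
      ultimately show ?thesis using QQ by (simp add: algebra_simps)
    qed
    define T where "T = (\<Sum>i\<in>S. a i)^2"
    have S3: "real (card S) * Q' \<le> T * L" using S(3) by (simp add: Q'_def L_def T_def)
    have T0: "T \<ge> 0" by (simp add: T_def)
    have "real (card S) * Q * L \<le> real (card S) * (Q' * L')"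
      using QL by (simp add: mult.assoc mult_left_mono)
    also have "\<dots> = (real (card S) * Q') * L'" by simp
    also have "\<dots> \<le> (T * L) * L'" using S3 L'pos by (intro mult_right_mono) auto
    finally have "(real (card S) * Q) * L \<le> (T * L') * L" by (simp add: algebra_simps)
    then have "real (card S) * Q \<le> T * L'" using Lpos by simp
    then show ?thesis using S A'_def by (intro exI[of _ S]) (auto simp: Q_def T_def L'_def)
  qed
qed

lemma half:
  fixes phi :: "nat \<Rightarrow> complex"
  assumes n1: "n \<ge> 1"
    and Q: "(\<Sum>i\<in>{i\<in>{1..2^n}. Re (phi i) > 0}. (Re (phi i))^2) \<ge> 1/4"
  shows "\<exists>S. S \<subseteq> {1..2^n} \<and> S \<noteq> {} \<and>
           cmod (braket (2^n) (subset_state S) phi) \<ge> 1 / (8 * sqrt (real n + 3))"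
proof -
  define A where "A = {i\<in>{1..(2::nat)^n}. Re (phi i) > 0}"
  have fA: "finite A" by (simp add: A_def)
  have Ane: "A \<noteq> {}"
  proof
    assume "A = {}"
    then have "(\<Sum>i\<in>A. (Re (phi i))^2) = 0" by simp
    then show False using Q unfolding A_def by simp
  qed
  define k where "k = card A"
  have k1: "k \<ge> 1" using fA Ane by (simp add: k_def Suc_le_eq card_gt_0_iff)
  have kN: "k \<le> 2^n" unfolding k_def A_def
    by (rule order.trans[OF card_mono[of "{1..2^n}"]]) auto
  obtain S where S: "S \<subseteq> A" "S \<noteq> {}"
    "real (card S) * (\<Sum>i\<in>A. (Re (phi i))^2) \<le> (\<Sum>i\<in>S. Re (phi i))^2 * (1 + ln (real k))"
    using key[OF fA k_def[symmetric] k1, of "\<lambda>i. Re (phi i)"] by (auto simp: A_def)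
  define c where "c = real (card S)"
  define s where "s = (\<Sum>i\<in>S. Re (phi i))"
  have fS: "finite S" using S fA finite_subset by blast
  have cpos: "c > 0" using fS S by (simp add: c_def card_gt_0_iff)
  have s0: "s \<ge> 0" unfolding s_def using S by (intro sum_nonneg) (auto simp: A_def)
  have SN: "S \<subseteq> {1..2^n}" using S by (auto simp: A_def)
  have lnk: "ln (real k) \<le> real n"
  proof -
    have "ln (real k) \<le> ln (2^n)" using k1 kN by simp
    also have "\<dots> = real n * ln 2" by (simp add: ln_realpow)
    also have "\<dots> \<le> real n" using ln_2_less_1 by (simp add: mult_left_le)
    finally show ?thesis .
  qed
  have L0: "1 + ln (real k) > 0" using k1 by (smt (verit) ln_ge_zero of_nat_1 of_nat_mono)
  have "c * (1/4) \<le> c * (\<Sum>i\<in>A. (Re (phi i))^2)" using Q cpos by (simp add: A_def)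
  also have "\<dots> \<le> s^2 * (1 + ln (real k))" using S(3) by (simp add: c_def s_def)
  also have "\<dots> \<le> s^2 * (real n + 1)" using lnk by (intro mult_left_mono) auto
  finally have cs: "c * (1/4) \<le> s^2 * (real n + 1)" .
  have br: "braket (2^n) (subset_state S) phi = (\<Sum>i\<in>S. complex_of_real (1 / sqrt c) * phi i)"
  proof -
    have "braket (2^n) (subset_state S) phi = (\<Sum>i\<in>{1..2^n}. if i \<in> S then complex_of_real (1 / sqrt c) * phi i else 0)"
      unfolding braket_def subset_state_def c_def by (intro sum.cong) auto
    also have "\<dots> = (\<Sum>i\<in>{1..2^n} \<inter> S. complex_of_real (1 / sqrt c) * phi i)"
      by (rule sum.inter_restrict[symmetric]) simp
    also have "{1..2^n} \<inter> S = S" using SN by blast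
    finally show ?thesis .
  qed
  have "Re (braket (2^n) (subset_state S) phi) = s / sqrt c"
    unfolding br s_def by (simp add: sum_divide_distrib)
  then have ge: "cmod (braket (2^n) (subset_state S) phi) \<ge> s / sqrt c"
    using abs_Re_le_cmod[of "braket (2^n) (subset_state S) phi"] by linarith
  have sq: "(1 / (8 * sqrt (real n + 3)))^2 \<le> (s / sqrt c)^2"
  proof -
    have l: "(1 / (8 * sqrt (real n + 3)))^2 = 1 / (64 * (real n + 3))"
      by (simp add: power_divide power_mult_distrib)
    have r: "(s / sqrt c)^2 = s^2 / c" using cpos by (simp add: power_divide)
    have "1 / (64 * (real n + 3)) \<le> s^2 / c"
    proof -
      have "0 \<le> real n * s^2" by simp
      moreover have "c \<le> 4 * s^2 + real n * (4 * s^2)" using cs by (simp add: algebra_simps)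
      moreover have "0 \<le> s^2" by simp
      ultimately have "c \<le> s^2 * 192 + real n * (s^2 * 64)" by linarith
      then have "c \<le> s^2 * (64 * (real n + 3))" by (simp add: algebra_simps)
      then show ?thesis using cpos by (simp add: field_simps)
    qed
    then show ?thesis using l r by simp
  qed
  have "1 / (8 * sqrt (real n + 3)) \<le> s / sqrt c"
  proof (rule power2_le_imp_le[OF sq])
    show "0 \<le> s / sqrt c" using s0 cpos by (intro divide_nonneg_nonneg) auto
  qed
  then have "1 / (8 * sqrt (real n + 3)) \<le> cmod (braket (2^n) (subset_state S) phi)"
    using ge by linarith
  then show ?thesis using SN S(2) by blast
qed

lemma phase:
  fixes phi :: "nat \<Rightarrow> complex" and c :: complex
  assumes n1: "n \<ge> 1" and c1: "cmod c = 1"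
    and Q: "(\<Sum>i\<in>{1..2^n}. (if Re (c * phi i) > 0 then (Re (c * phi i))^2 else 0)) \<ge> 1/4"
  shows "\<exists>S. S \<subseteq> {1..2^n} \<and> S \<noteq> {} \<and>
           cmod (braket (2^n) (subset_state S) phi) \<ge> 1 / (8 * sqrt (real n + 3))"
proof -
  have "(\<Sum>i\<in>{i\<in>{1..(2::nat)^n}. Re (c * phi i) > 0}. (Re (c * phi i))^2) \<ge> 1/4"
    using Q by (subst sum.inter_filter) auto
  from half[OF n1, of "\<lambda>i. c * phi i"] this obtain S where
    S: "S \<subseteq> {1..2^n}" "S \<noteq> {}"
    "cmod (braket (2^n) (subset_state S) (\<lambda>i. c * phi i)) \<ge> 1 / (8 * sqrt (real n + 3))"
    by auto
  have "braket (2^n) (subset_state S) (\<lambda>i. c * phi i) = c * braket (2^n) (subset_state S) phi"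
    unfolding braket_def by (simp add: sum_distrib_left algebra_simps)
  then have "cmod (braket (2^n) (subset_state S) (\<lambda>i. c * phi i)) = cmod (braket (2^n) (subset_state S) phi)"
    using c1 by (simp add: norm_mult)
  then show ?thesis using S by auto
qed

lemma pointwise:
  fixes z :: complex
  shows "(cmod z)^2 = (if Re (1 * z) > 0 then (Re (1 * z))^2 else 0)
    + (if Re ((-1) * z) > 0 then (Re ((-1) * z))^2 else 0)
    + (if Re ((-\<i>) * z) > 0 then (Re ((-\<i>) * z))^2 else 0)
    + (if Re (\<i> * z) > 0 then (Re (\<i> * z))^2 else 0)"
  by (simp add: cmod_power2)

theorem mainTheorem2:
  fixes n :: nat and psi :: "nat \<Rightarrow> complex"
  assumes "n \<ge> 1"
    and "(\<Sum>i\<in>{1..2^n}. (cmod (psi i))^2) = 1"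
  shows "\<exists>S. S \<subseteq> {1..2^n} \<and> S \<noteq> {} \<and>
           cmod (braket (2^n) (subset_state S) psi) \<ge> 1 / (8 * sqrt (real n + 3))"
proof -
  define g where "g c = (\<Sum>i\<in>{1..(2::nat)^n}. (if Re (c * psi i) > 0 then (Re (c * psi i))^2 else 0))" for c
  have "1 = g 1 + g (-1) + g (-\<i>) + g \<i>"
    unfolding g_def assms(2)[symmetric] by (subst pointwise) (simp add: sum.distrib)
  then have "g 1 \<ge> 1/4 \<or> g (-1) \<ge> 1/4 \<or> g (-\<i>) \<ge> 1/4 \<or> g \<i> \<ge> 1/4" by linarith
  then show ?thesis
    using phase[OF assms(1), of 1 psi] phase[OF assms(1), of "-1" psi]
      phase[OF assms(1), of "-\<i>" psi] phase[OF assms(1), of "\<i>" psi]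
    unfolding g_def by auto
qed

end
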